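(* Let $d\ge2$, $j\in[d-1]$, $\tau=O(1)$ and $\mathbf p=\tau\bar{\mathbf p}$ for a $j$-admissible direction $\bar{\mathbf p}$, and let $\mathcal G_\tau=\mathcal G(n,\mathbf p)$. Let $\mathcal J$ be a collection of $O(1)$ many $(j+1)$-subsets of $[n]$ and $\mathcal S$ a collection of $O(1)$ many subsets of $[n]$ of sizes between $j+2$ and $d+1$. Let $A$ be the event that no set of $\mathcal J$ lies in any $k$-simplex $K$ of $\mathcal G_\tau$ with $j+1\le k\le d$ and $K\notin\mathcal S$. Then $\Pr(A)=(1+o(1))\bar q^{\,\tau|\mathcal J|}$, where $\bar q=\prod_{k=j+1}^d(1-\bar p_k)^{\binom{n-j-1}{k-j}}$.
   Context: $\mathcal G(n,\mathbf p)$: random simplicial complex on $[n]$ where for each $k\in[d]$ each $(k+1)$-subset of $[n]$ is independently an edge with probability $\min\{p_k,1\}$; the complex consists of all singletons and all nonempty subsets of edges; $i$-simplices are members of size $i+1$. Asymptotics as $n\to\infty$. $j$-admissible: $\bar{\mathbf p}=(\bar p_1,\dots,\bar p_d)$ is $j$-admissible if for each $1\le k\le d$ there are real constants $\bar\alpha_k,\bar\gamma_k$ and a function $\bar\beta_k(n)$ with $\bar p_k=\frac{\bar\alpha_k\log n+\bar\beta_k}{n^{k-j+\bar\gamma_k}}(k-j)!$ and (A1) at least one of $\bar\alpha_k,\bar\gamma_k$ is zero and neither negative; (A2) if $\bar\alpha_k=0$ then $\bar\beta_k\equiv0$ or $\bar\beta_k>0$ with $\bar\beta_k=o(n^\varepsilon)$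 and $\bar\beta_k=\omega(n^{-\varepsilon})$ for every constant $\varepsilon>0$; (A3) if $\bar\gamma_k=0$ then $|\bar\beta_k|=o(\log n)$; (A4) some $k_0\in\{j+1,\dots,d\}$ has $\bar\alpha_{k_0}>0$. *)

theory Defs
  imports "HOL-Probability.Probability" "HOL-Library.Landau_Symbols"
begin

definition candidate_edges :: "nat \<Rightarrow> nat \<Rightarrow> nat set set" where
  "candidate_edges d n = {e. e \<subseteq> {1..n} \<and> 2 \<le> card e \<and> card e \<le> d + 1}"

text \<open>The random complex G(n,p): an outcome G is the indicator of the edge set;
  a (k+1)-set is an edge independently with probability min (p k n) 1
  (bernoulli_pmf additionally clamps at 0).\<close>
definition random_complex :: "nat \<Rightarrow> (nat \<Rightarrow> nat \<Rightarrow> real) \<Rightarrow> nat \<Rightarrow> (nat set \<Rightarrow> bool) pmf" where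
  "random_complex d p n =
     Pi_pmf (candidate_edges d n) False (\<lambda>e. bernoulli_pmf (min (p (card e - 1) n) 1))"

definition is_simplex :: "nat \<Rightarrow> (nat set \<Rightarrow> bool) \<Rightarrow> nat set \<Rightarrow> bool" where
  "is_simplex n G K \<longleftrightarrow> K \<subseteq> {1..n} \<and> K \<noteq> {} \<and> (card K = 1 \<or> (\<exists>e. G e \<and> K \<subseteq> e))"

definition event_A :: "nat \<Rightarrow> nat \<Rightarrow> nat \<Rightarrow> nat set set \<Rightarrow> nat set set \<Rightarrow> (nat set \<Rightarrow> bool) \<Rightarrow> bool" where
  "event_A n d j J S G \<longleftrightarrow>
     \<not> (\<exists>I\<in>J. \<exists>K. I \<subseteq> K \<and> j + 2 \<le> card K \<and> card K \<le> d + 1 \<and> K \<notin> S \<and> is_simplex n G K)"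

text \<open>j-admissible direction pbar (pbar k n is the k-th coordinate at n).
  For k < j the factorial (k-j)! is read as 1 (nat subtraction); these coordinates are
  irrelevant for the statement below.\<close>
definition j_admissible :: "nat \<Rightarrow> nat \<Rightarrow> (nat \<Rightarrow> nat \<Rightarrow> real) \<Rightarrow> bool" where
  "j_admissible d j pbar \<longleftrightarrow>
     (\<exists>(\<alpha>::nat \<Rightarrow> real) (\<gamma>::nat \<Rightarrow> real) (\<beta>::nat \<Rightarrow> nat \<Rightarrow> real).
        (\<forall>k\<in>{1..d}.
           (\<forall>n. pbar k n = (\<alpha> k * ln (real n) + \<beta> k n)
                 / real n powr (real k - real j + \<gamma> k) * fact (k - j))
         \<and> (\<alpha> k = 0 \<or> \<gamma> k = 0) \<and> \<alpha> k \<ge> 0 \<and> \<gamma> k \<ge> 0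
         \<and> (\<alpha> k = 0 \<longrightarrow>
              ((\<forall>n. \<beta> k n = 0) \<or>
               ((\<forall>n. \<beta> k n > 0) \<and>
                (\<forall>\<epsilon>>0. \<beta> k \<in> o(\<lambda>n. real n powr \<epsilon>) \<and> \<beta> k \<in> \<omega>(\<lambda>n. real n powr (-\<epsilon>))))))
         \<and> (\<gamma> k = 0 \<longrightarrow> (\<lambda>n. \<bar>\<beta> k n\<bar>) \<in> o(\<lambda>n. ln (real n))))
      \<and> (\<exists>k0\<in>{j+1..d}. \<alpha> k0 > 0))"

definition qbar :: "nat \<Rightarrow> nat \<Rightarrow> (nat \<Rightarrow> nat \<Rightarrow> real) \<Rightarrow> nat \<Rightarrow> real" where
  "qbar d j pbar n = (\<Prod>k\<in>{j+1..d}. (1 - pbar k n) ^ ((n - j - 1) choose (k - j)))"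

end

theory Submission
  imports Defs "HOL-Real_Asymp.Real_Asymp"
begin


lemma card_supersets:
  assumes "finite A" "L \<subseteq> A" "card L \<le> s"
  shows "card {e. e \<subseteq> A \<and> L \<subseteq> e \<and> card e = s} = (card A - card L) choose (s - card L)"
proof -
  have fL: "finite L" using assms finite_subset by blast
  have "bij_betw (\<lambda>e. e - L) {e. e \<subseteq> A \<and> L \<subseteq> e \<and> card e = s} {B. B \<subseteq> A - L \<and> card B = s - card L}"
  proof (rule bij_betw_byWitness[where f' = "\<lambda>B. B \<union> L"])
    show "\<forall>a\<in>{e. e \<subseteq> A \<and> L \<subseteq> e \<and> card e = s}. a - L \<union> L = a" by auto
    show "\<forall>a'\<in>{B. B \<subseteq> A - L \<and> card B = s - card L}. a' \<union> L - L = a'" by auto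
    show "(\<lambda>e. e - L) ` {e. e \<subseteq> A \<and> L \<subseteq> e \<and> card e = s} \<subseteq> {B. B \<subseteq> A - L \<and> card B = s - card L}"
    proof safe
      fix e assume "e \<subseteq> A" "L \<subseteq> e" "s = card e"
      then show "card (e - L) = card e - card L"
        using assms(1) finite_subset card_Diff_subset fL by metis
    qed auto
    show "(\<lambda>B. B \<union> L) ` {B. B \<subseteq> A - L \<and> card B = s - card L} \<subseteq> {e. e \<subseteq> A \<and> L \<subseteq> e \<and> card e = s}"
    proof safe
      fix B assume B: "B \<subseteq> A - L" "card B = s - card L"
      have "finite B" using B assms(1) finite_subset by blast
      have "card (B \<union> L) = card B + card L"
        by (rule card_Un_disjoint) (use B fL \<open>finite B\<close> in auto)
      then show "card (B \<union> L) = s" using B assms(3) by simp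
    qed (use assms in auto)
  qed
  then have "card {e. e \<subseteq> A \<and> L \<subseteq> e \<and> card e = s} = card {B. B \<subseteq> A - L \<and> card B = s - card L}"
    by (rule bij_betw_same_card)
  also have "\<dots> = card (A - L) choose (s - card L)"
    using assms by (intro n_subsets) auto
  finally show ?thesis using assms fL by (simp add: card_Diff_subset)
qed

lemma sum_supersets_card:
  fixes \<phi> :: "nat \<Rightarrow> real"
  assumes "finite A" "L \<subseteq> A" "card L \<le> a"
  shows "(\<Sum>e\<in>{e. e \<subseteq> A \<and> L \<subseteq> e \<and> a \<le> card e \<and> card e \<le> b}. \<phi> (card e))
       = (\<Sum>s=a..b. real ((card A - card L) choose (s - card L)) * \<phi> s)"
proof -
  have eq: "{e. e \<subseteq> A \<and> L \<subseteq> e \<and> a \<le> card e \<and> card e \<le> b}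
      = (\<Union>s\<in>{a..b}. {e. e \<subseteq> A \<and> L \<subseteq> e \<and> card e = s})" by auto
  have fin: "finite {e. e \<subseteq> A \<and> L \<subseteq> e \<and> card e = s}" for s
    using assms(1) by (rule rev_finite_subset[OF finite_Pow_iff[THEN iffD2]]) auto
  have "(\<Sum>e\<in>(\<Union>s\<in>{a..b}. {e. e \<subseteq> A \<and> L \<subseteq> e \<and> card e = s}). \<phi> (card e))
     = (\<Sum>s=a..b. \<Sum>e\<in>{e. e \<subseteq> A \<and> L \<subseteq> e \<and> card e = s}. \<phi> (card e))"
    by (rule sum.UNION_disjoint) (use fin in auto)
  also have "\<dots> = (\<Sum>s=a..b. real ((card A - card L) choose (s - card L)) * \<phi> s)"
  proof (rule sum.cong[OF refl])
    fix s assume s: "s \<in> {a..b}"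
    have "(\<Sum>e\<in>{e. e \<subseteq> A \<and> L \<subseteq> e \<and> card e = s}. \<phi> (card e)) = (\<Sum>e\<in>{e. e \<subseteq> A \<and> L \<subseteq> e \<and> card e = s}. \<phi> s)"
      by (rule sum.cong) auto
    also have "\<dots> = real (card {e. e \<subseteq> A \<and> L \<subseteq> e \<and> card e = s}) * \<phi> s" by simp
    also have "card {e. e \<subseteq> A \<and> L \<subseteq> e \<and> card e = s} = (card A - card L) choose (s - card L)"
      using s assms by (intro card_supersets) auto
    finally show "(\<Sum>e\<in>{e. e \<subseteq> A \<and> L \<subseteq> e \<and> card e = s}. \<phi> (card e)) = real ((card A - card L) choose (s - card L)) * \<phi> s" .
  qed
  finally show ?thesis using eq by simp
qed

lemma sum_union_bound:
  fixes h :: "'a \<Rightarrow> real"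
  assumes "finite J" "\<And>I. I \<in> J \<Longrightarrow> finite (E I)" "\<And>x. h x \<ge> 0"
  shows "sum h (\<Union>(E ` J)) \<le> (\<Sum>I\<in>J. sum h (E I))"
  using assms(1,2)
proof (induction J rule: finite_induct)
  case empty then show ?case by simp
next
  case (insert a J)
  have "sum h (\<Union>(E ` insert a J)) = sum h (E a \<union> \<Union>(E ` J))" by simp
  also have "\<dots> \<le> sum h (E a) + sum h (\<Union>(E ` J))"
    using sum_Un[of "E a" "\<Union>(E ` J)" h] insert sum_nonneg[of "E a \<inter> \<Union>(E ` J)" h] assms(3) by auto
  also have "\<dots> \<le> sum h (E a) + (\<Sum>I\<in>J. sum h (E I))" using insert by simp
  finally show ?case using insert by simp
qed

lemma sum_bonferroni:
  fixes h :: "'a \<Rightarrow> real"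
  assumes "finite J" "\<And>I. I \<in> J \<Longrightarrow> finite (E I)" "\<And>x. h x \<ge> 0"
  shows "(\<Sum>I\<in>J. sum h (E I)) \<le> sum h (\<Union>(E ` J))
           + (\<Sum>I\<in>J. \<Sum>I'\<in>J. if I = I' then 0 else sum h (E I \<inter> E I'))"
  using assms(1,2)
proof (induction J rule: finite_induct)
  case empty then show ?case by simp
next
  case (insert a J)
  let ?U = "\<Union>(E ` J)"
  let ?P = "\<lambda>J. (\<Sum>I\<in>J. \<Sum>I'\<in>J. if I = I' then 0 else sum h (E I \<inter> E I'))"
  have fU: "finite ?U" using insert by auto
  have fa: "finite (E a)" using insert by auto
  have hp: "\<And>A. 0 \<le> sum h A" by (simp add: assms(3) sum_nonneg)
  have P: "?P (insert a J) = (\<Sum>I'\<in>J. sum h (E a \<inter> E I')) + (\<Sum>I\<in>J. sum h (E I \<inter> E a)) + ?P J"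
  proof -
    have "?P (insert a J) = (\<Sum>I'\<in>insert a J. if a = I' then 0 else sum h (E a \<inter> E I'))
        + (\<Sum>I\<in>J. \<Sum>I'\<in>insert a J. if I = I' then 0 else sum h (E I \<inter> E I'))"
      using insert by (simp add: sum.insert)
    also have "(\<Sum>I'\<in>insert a J. if a = I' then 0 else sum h (E a \<inter> E I')) = (\<Sum>I'\<in>J. sum h (E a \<inter> E I'))"
      using insert by (auto simp: sum.insert intro!: sum.cong)
    also have "(\<Sum>I\<in>J. \<Sum>I'\<in>insert a J. if I = I' then 0 else sum h (E I \<inter> E I'))
       = (\<Sum>I\<in>J. sum h (E I \<inter> E a) + (\<Sum>I'\<in>J. if I = I' then 0 else sum h (E I \<inter> E I')))"
      using insert by (intro sum.cong) (auto simp: sum.insert)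
    finally show ?thesis by (simp add: sum.distrib)
  qed
  have ua: "sum h (E a \<inter> ?U) \<le> (\<Sum>I'\<in>J. sum h (E a \<inter> E I'))"
  proof -
    have "E a \<inter> ?U = (\<Union>I\<in>J. E a \<inter> E I)" by auto
    then show ?thesis using sum_union_bound[of J "\<lambda>I. E a \<inter> E I" h] insert assms(3) by auto
  qed
  have un: "sum h (E a \<union> ?U) = sum h (E a) + sum h ?U - sum h (E a \<inter> ?U)"
    using sum_Un[OF fa fU, of h] by simp
  have "(\<Sum>I\<in>insert a J. sum h (E I)) = sum h (E a) + (\<Sum>I\<in>J. sum h (E I))" using insert by simp
  also have "\<dots> \<le> sum h (E a) + sum h ?U + ?P J" using insert by simp
  also have "\<dots> \<le> sum h (E a \<union> ?U) + ?P (insert a J)"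
    using un P ua hp[of "E a \<inter> ?U"] sum_nonneg[of J "\<lambda>I. sum h (E I \<inter> E a)"] hp by simp
  finally show ?case by simp
qed

lemma ln_bounds:
  fixes y :: real assumes "0 \<le> y" "y \<le> 1/2"
  shows "\<bar>ln (1 - y) + y\<bar> \<le> 2 * y^2" "- ln (1 - y) \<le> 2 * y" "0 \<le> - ln (1 - y)"
proof -
  have l: "- y - 2 * y\<^sup>2 \<le> ln (1 - y)" using ln_one_minus_pos_lower_bound assms by blast
  have u: "ln (1 - y) \<le> - y" using ln_add_one_self_le_self2[of "-y"] assms by simp
  show "\<bar>ln (1 - y) + y\<bar> \<le> 2 * y^2" using l u by simp
  have "y * (2*y) \<le> y * 1" using assms by (intro mult_left_mono) auto
  then have "y^2 \<le> y * (1/2)" by (simp add: power2_eq_square)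
  then show "- ln (1 - y) \<le> 2 * y" using l by simp
  show "0 \<le> - ln (1 - y)" using u assms by simp
qed



lemma ln_ev_ge1: "eventually (\<lambda>n. 1 \<le> ln (real n)) sequentially"
  by real_asymp

lemma pbar_bound:
  assumes adm: "j_admissible d j pbar" and k: "k \<in> {j+1..d}"
  shows "\<exists>C>0. eventually (\<lambda>n. 0 \<le> pbar k n \<and> pbar k n * real n ^ (k-j) \<le> C * ln (real n)) sequentially"
proof -
  obtain \<alpha> \<gamma> \<beta> where H: "\<forall>k\<in>{1..d}.
           (\<forall>n. pbar k n = (\<alpha> k * ln (real n) + \<beta> k n)
                 / real n powr (real k - real j + \<gamma> k) * fact (k - j))
         \<and> (\<alpha> k = 0 \<or> \<gamma> k = 0) \<and> \<alpha> k \<ge> 0 \<and> \<gamma> k \<ge> 0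
         \<and> (\<alpha> k = 0 \<longrightarrow>
              ((\<forall>n. \<beta> k n = 0) \<or>
               ((\<forall>n. \<beta> k n > 0) \<and>
                (\<forall>\<epsilon>>0. \<beta> k \<in> o(\<lambda>n. real n powr \<epsilon>) \<and> \<beta> k \<in> \<omega>(\<lambda>n. real n powr (-\<epsilon>))))))
         \<and> (\<gamma> k = 0 \<longrightarrow> (\<lambda>n. \<bar>\<beta> k n\<bar>) \<in> o(\<lambda>n. ln (real n)))"
    using adm unfolding j_admissible_def by blast
  have k1: "k \<in> {1..d}" using k by auto
  note Hk = H[rule_format, OF k1]
  have pdef: "\<And>n. pbar k n = (\<alpha> k * ln (real n) + \<beta> k n)
                 / real n powr (real k - real j + \<gamma> k) * fact (k - j)" using Hk by blast
  have ag: "\<alpha> k = 0 \<or> \<gamma> k = 0" "\<alpha> k \<ge> 0" "\<gamma> k \<ge> 0" using Hk by blast+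
  have a0c: "\<alpha> k = 0 \<Longrightarrow> ((\<forall>n. \<beta> k n = 0) \<or>
               ((\<forall>n. \<beta> k n > 0) \<and>
                (\<forall>\<epsilon>>0. \<beta> k \<in> o(\<lambda>n. real n powr \<epsilon>))))" using Hk by blast
  have g0c: "\<gamma> k = 0 \<Longrightarrow> (\<lambda>n. \<bar>\<beta> k n\<bar>) \<in> o(\<lambda>n. ln (real n))" using Hk by blast
  define F :: real where "F = fact (k - j)"
  have F: "F > 0" unfolding F_def by simp
  have key: "pbar k n * real n ^ (k-j) = (\<alpha> k * ln (real n) + \<beta> k n) * F / real n powr \<gamma> k"
    if n: "n \<ge> 1" for n
  proof -
    have "real k - real j + \<gamma> k = real (k - j) + \<gamma> k" using k by (simp add: of_nat_diff)
    moreover have "real n powr real (k-j) = real n ^ (k-j)" by (rule powr_realpow) (use n in simp)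
    ultimately have "real n powr (real k - real j + \<gamma> k) = real n ^ (k-j) * real n powr \<gamma> k"
      by (simp only: powr_add)
    moreover have "real n ^ (k-j) \<noteq> 0" "real n powr \<gamma> k \<noteq> 0" using n by simp_all
    ultimately show ?thesis unfolding pdef F_def by (simp add: field_simps)
  qed
  have ev1: "eventually (\<lambda>n. (n::nat) \<ge> 1) sequentially" by (rule eventually_ge_at_top)
  show ?thesis
  proof (cases "\<alpha> k > 0")
    case True
    then have g0: "\<gamma> k = 0" using ag by auto
    have "eventually (\<lambda>n. norm \<bar>\<beta> k n\<bar> \<le> \<alpha> k * norm (ln (real n))) sequentially"
      using g0c[OF g0] True by (intro landau_o.smallD) auto
    then have "eventually (\<lambda>n. 0 \<le> pbar k n \<and> pbar k n * real n ^ (k-j) \<le> (2 * \<alpha> k * F) * ln (real n)) sequentially"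
      using ev1 ln_ev_ge1
    proof eventually_elim
      case (elim n)
      have e: "pbar k n * real n ^ (k-j) = (\<alpha> k * ln (real n) + \<beta> k n) * F" using key[OF elim(2)] g0 elim(2) by simp
      have b: "\<bar>\<beta> k n\<bar> \<le> \<alpha> k * ln (real n)" using elim(1,3) by simp
      have "0 \<le> (\<alpha> k * ln (real n) + \<beta> k n) * F" using b F by (intro mult_nonneg_nonneg) auto
      then have "0 \<le> pbar k n * real n ^ (k-j)" using e by simp
      moreover have "real n ^ (k-j) > 0" using elim(2) by simp
      ultimately have p0: "0 \<le> pbar k n" using zero_le_mult_iff by (metis not_le)
      have "(\<alpha> k * ln (real n) + \<beta> k n) * F \<le> (2 * \<alpha> k * ln (real n)) * F"
        using b F by (intro mult_right_mono) auto
      then show ?case using e p0 by (simp add: algebra_simps)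
    qed
    then show ?thesis using True F by (intro exI[of _ "2 * \<alpha> k * F"]) auto
  next
    case False
    then have a0: "\<alpha> k = 0" using ag by auto
    show ?thesis
    proof (cases "\<forall>n. \<beta> k n = 0")
      case True
      have "eventually (\<lambda>n. 0 \<le> pbar k n \<and> pbar k n * real n ^ (k-j) \<le> 1 * ln (real n)) sequentially"
        using ln_ev_ge1 by eventually_elim (simp add: pdef a0 True)
      then show ?thesis by (intro exI[of _ 1]) auto
    next
      case False
      then have bpos: "\<forall>n. \<beta> k n > 0" and bo: "\<forall>\<epsilon>>0. \<beta> k \<in> o(\<lambda>n. real n powr \<epsilon>)"
        using a0c[OF a0] by auto
      have pnn: "0 \<le> pbar k n" for n unfolding pdef a0 using bpos[rule_format, of n] by (auto intro!: divide_nonneg_nonneg less_imp_le)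
      show ?thesis
      proof (cases "\<gamma> k = 0")
        case True
        have "eventually (\<lambda>n. norm \<bar>\<beta> k n\<bar> \<le> 1 * norm (ln (real n))) sequentially"
          using g0c[OF True] by (intro landau_o.smallD) auto
        then have "eventually (\<lambda>n. 0 \<le> pbar k n \<and> pbar k n * real n ^ (k-j) \<le> F * ln (real n)) sequentially"
          using ev1 ln_ev_ge1
        proof eventually_elim
          case (elim n)
          have e: "pbar k n * real n ^ (k-j) = \<beta> k n * F" using key[OF elim(2)] True a0 elim(2) by simp
          have "\<beta> k n \<le> ln (real n)" using elim(1,3) by simp
          then have "\<beta> k n * F \<le> ln (real n) * F" using F by (intro mult_right_mono) auto
          then show ?case using e pnn by (simp add: algebra_simps)
        qed
        then show ?thesis using F by (intro exI[of _ F]) auto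
      next
        case False
        then have gp: "\<gamma> k > 0" using ag by auto
        have "eventually (\<lambda>n. norm (\<beta> k n) \<le> 1 * norm (real n powr \<gamma> k)) sequentially"
          using bo gp by (intro landau_o.smallD) auto
        then have "eventually (\<lambda>n. 0 \<le> pbar k n \<and> pbar k n * real n ^ (k-j) \<le> F * ln (real n)) sequentially"
          using ev1 ln_ev_ge1
        proof eventually_elim
          case (elim n)
          have np: "real n powr \<gamma> k > 0" using elim(2) by simp
          have e: "pbar k n * real n ^ (k-j) = \<beta> k n * F / real n powr \<gamma> k" using key[OF elim(2)] a0 by simp
          have "\<beta> k n \<le> real n powr \<gamma> k" using elim(1) by simp
          then have "\<beta> k n / real n powr \<gamma> k \<le> 1" using np by simp
          then have "\<beta> k n / real n powr \<gamma> k * F \<le> 1 * F" using F by (intro mult_right_mono) auto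
          also have "\<dots> \<le> ln (real n) * F" using F elim(3) by (intro mult_right_mono) auto
          finally show ?case using e pnn by (simp add: algebra_simps)
        qed
        then show ?thesis using F by (intro exI[of _ F]) auto
      qed
    qed
  qed
qed



lemma choose_le_pow': "a \<le> n \<Longrightarrow> real (a choose b) \<le> real n ^ b"
proof (cases "b \<le> a")
  case True
  assume "a \<le> n"
  have "a choose b \<le> a ^ b" by (rule binomial_le_pow[OF True])
  also have "\<dots> \<le> n ^ b" using \<open>a \<le> n\<close> by (rule power_mono) simp
  finally show ?thesis by (metis of_nat_le_iff of_nat_power)
next
  case False then show ?thesis by (simp add: binomial_eq_0)
qed

lemma core:
  fixes n d j MJ MS :: nat and x :: "nat \<Rightarrow> real" and t T C :: real and J S :: "nat set set"
  assumes j: "1 \<le> j" "j + 1 \<le> d" and n: "1 \<le> n" "1 \<le> ln (real n)"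
    and J: "finite J" "card J \<le> MJ" "\<And>I. I \<in> J \<Longrightarrow> I \<subseteq> {1..n} \<and> card I = j + 1"
    and S: "finite S" "card S \<le> MS"
    and t: "0 \<le> t" "t \<le> T" "1 \<le> T" and C: "0 \<le> C"
    and hx: "\<And>k. k \<in> {j+1..d} \<Longrightarrow> 0 \<le> x k \<and> x k * real n ^ (k-j) \<le> C * ln (real n)"
    and hT: "\<And>k. k \<in> {j+1..d} \<Longrightarrow> T * x k \<le> 1/2"
  shows "\<bar>(\<Sum>e\<in>{e \<in> candidate_edges d n. \<exists>I\<in>J. \<exists>K. I \<subseteq> K \<and> K \<subseteq> e \<and> j+2 \<le> card K \<and> K \<notin> S}.
              - ln (1 - t * x (card e - 1)))
          - real (card J) * (\<Sum>k\<in>{j+1..d}. real ((n-j-1) choose (k-j)) * (- t * ln (1 - x k)))\<bar>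
         \<le> (real MJ * d * (2*T^2+2*T) * C^2 + real MS * 2 * T * C + real MJ^2 * d * 2 * T * C) * ln (real n)^2 / real n"
proof -
  define Bad where "Bad = {e \<in> candidate_edges d n. \<exists>I\<in>J. \<exists>K. I \<subseteq> K \<and> K \<subseteq> e \<and> j+2 \<le> card K \<and> K \<notin> S}"
  define X where "X = (\<lambda>s. if s - 1 \<in> {j+1..d} then x (s - 1) else 0)"
  define f where "f = (\<lambda>e::nat set. - ln (1 - t * X (card e)))"
  define g where "g = (\<lambda>e::nat set. - t * ln (1 - X (card e)))"
  define E where "E = (\<lambda>I::nat set. {e. e \<subseteq> {1..n} \<and> I \<subseteq> e \<and> j+2 \<le> card e \<and> card e \<le> d+1})"
  define U where "U = \<Union>(E ` J)"
  define Cf where "Cf = 2*T^2+2*T"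
  define L where "L = ln (real n)"
  have L1: "1 \<le> L" using n L_def by simp
  have nr: "real n \<ge> 1" using n by simp
  have Xp: "0 \<le> X s" "X s \<le> 1/2" "t * X s \<le> 1/2" "T * X s \<le> 1/2" for s
  proof -
    show "0 \<le> X s" using hx unfolding X_def by auto
    show tx: "T * X s \<le> 1/2" using hT unfolding X_def by auto
    have "X s \<le> T * X s" using mult_right_mono[of 1 T "X s"] \<open>0 \<le> X s\<close> t by simp
    then show "X s \<le> 1/2" using tx by simp
    have "t * X s \<le> T * X s" using \<open>0 \<le> X s\<close> t by (simp add: mult_right_mono)
    then show "t * X s \<le> 1/2" using tx by simp
  qed
  have tX0: "0 \<le> t * X s" for s using Xp t by simp
  have f0: "0 \<le> f e" and f2: "f e \<le> 2 * T * X (card e)" for e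
  proof -
    show "0 \<le> f e" unfolding f_def using ln_bounds(3)[OF tX0 Xp(3)] .
    have "f e \<le> 2 * (t * X (card e))" unfolding f_def using ln_bounds(2)[OF tX0 Xp(3)] .
    also have "\<dots> \<le> 2 * (T * X (card e))" using t Xp by (simp add: mult_right_mono)
    finally show "f e \<le> 2 * T * X (card e)" by simp
  qed
  have g0: "0 \<le> g e" and g2: "g e \<le> 2 * T * X (card e)" for e
  proof -
    show "0 \<le> g e" unfolding g_def using ln_bounds(3)[OF Xp(1,2)] t by (simp add: mult_nonneg_nonpos)
    have "g e = t * (- ln (1 - X (card e)))" unfolding g_def by simp
    also have "\<dots> \<le> T * (2 * X (card e))"
      using ln_bounds(2,3)[OF Xp(1,2)] t by (intro mult_mono) auto
    finally show "g e \<le> 2 * T * X (card e)" by simp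
  qed
  have fg: "\<bar>f e - g e\<bar> \<le> Cf * X (card e)^2" for e
  proof -
    let ?y = "X (card e)"
    have a: "\<bar>ln (1 - t * ?y) + t * ?y\<bar> \<le> 2 * (t * ?y)^2" using ln_bounds(1)[OF tX0 Xp(3)] .
    have b: "\<bar>ln (1 - ?y) + ?y\<bar> \<le> 2 * ?y^2" using ln_bounds(1)[OF Xp(1,2)] .
    have "f e - g e = - (ln (1 - t * ?y) + t * ?y) + t * (ln (1 - ?y) + ?y)"
      unfolding f_def g_def by (simp add: algebra_simps)
    moreover have "\<bar>- (ln (1 - t * ?y) + t * ?y) + t * (ln (1 - ?y) + ?y)\<bar> \<le> \<bar>- (ln (1 - t * ?y) + t * ?y)\<bar> + \<bar>t * (ln (1 - ?y) + ?y)\<bar>"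
      by (rule abs_triangle_ineq)
    moreover have "\<bar>t * (ln (1 - ?y) + ?y)\<bar> = t * \<bar>ln (1 - ?y) + ?y\<bar>" using t by (simp add: abs_mult)
    ultimately have "\<bar>f e - g e\<bar> \<le> \<bar>ln (1 - t * ?y) + t * ?y\<bar> + t * \<bar>ln (1 - ?y) + ?y\<bar>"
      by (simp only: abs_minus_cancel)
    also have "\<dots> \<le> 2 * (t * ?y)^2 + t * (2 * ?y^2)"
      using a b t by (intro add_mono mult_left_mono) auto
    also have "\<dots> \<le> Cf * ?y^2"
    proof -
      have "t^2 \<le> T^2" using t by (intro power_mono) auto
      then have "2 * (t * ?y)^2 \<le> 2 * T^2 * ?y^2" by (simp add: power_mult_distrib mult_right_mono)
      moreover have "t * (2 * ?y^2) \<le> 2 * T * ?y^2" using t by (simp add: mult_right_mono)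
      ultimately show ?thesis unfolding Cf_def by (simp add: algebra_simps)
    qed
    finally show ?thesis .
  qed
  have Xn: "X s * real n ^ (s - 1 - j) \<le> C * L" if "s \<in> {j+2..d+1}" for s
    using hx[of "s-1"] that unfolding X_def L_def by auto
  have Xn1: "X s * real n \<le> C * L" for s
  proof (cases "s - 1 \<in> {j+1..d}")
    case True
    then have "s \<in> {j+2..d+1}" by auto
    have "real n ^ 1 \<le> real n ^ (s - 1 - j)" using True nr by (intro power_increasing) auto
    then have "X s * real n \<le> X s * real n ^ (s - 1 - j)" using Xp(1) by (simp add: mult_left_mono)
    also have "\<dots> \<le> C * L" using Xn[OF \<open>s \<in> _\<close>] .
    finally show ?thesis .
  next
    case False then show ?thesis unfolding X_def using C L1 False by auto
  qed
  have Xd: "X s \<le> C * L / real n" for s using Xn1[of s] nr by (simp add: field_simps)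
  have finE: "finite (E I)" for I unfolding E_def
    by (rule rev_finite_subset[of "Pow {1..n}"]) auto
  have finU: "finite U" unfolding U_def using J(1) finE by auto
  have BadU: "Bad \<subseteq> U"
  proof
    fix e assume "e \<in> Bad"
    then obtain I K where e: "e \<in> candidate_edges d n" "I \<in> J" "I \<subseteq> K" "K \<subseteq> e" "j+2 \<le> card K" "K \<notin> S"
      unfolding Bad_def by blast
    have fe: "finite e" using e(1) unfolding candidate_edges_def using finite_subset by blast
    have "card K \<le> card e" using card_mono[OF fe e(4)] .
    then have "e \<in> E I" using e unfolding E_def candidate_edges_def by auto
    then show "e \<in> U" unfolding U_def using e(2) by auto
  qed
  have UBad: "U \<subseteq> Bad \<union> (U \<inter> S)"
  proof
    fix e assume eU: "e \<in> U"
    then obtain I where I: "I \<in> J" "e \<in> E I" unfolding U_def by auto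
    show "e \<in> Bad \<union> (U \<inter> S)"
    proof (cases "e \<in> S")
      case True then show ?thesis using eU by auto
    next
      case False
      have "e \<in> candidate_edges d n" using I j unfolding E_def candidate_edges_def by auto
      then have "e \<in> Bad" unfolding Bad_def using I False unfolding E_def by blast
      then show ?thesis by simp
    qed
  qed
  define Gk where "Gk = (\<Sum>k\<in>{j+1..d}. real ((n-j-1) choose (k-j)) * (- t * ln (1 - x k)))"
  have sumE: "sum g (E I) = Gk" if I: "I \<in> J" for I
  proof -
    have cI: "card I = j + 1" "I \<subseteq> {1..n}" using J(3)[OF I] by auto
    have "sum g (E I) = (\<Sum>e\<in>E I. (\<lambda>s. - t * ln (1 - X s)) (card e))" unfolding g_def by simp
    also have "\<dots> = (\<Sum>s=j+2..d+1. real ((card {1..n} - card I) choose (s - card I)) * (- t * ln (1 - X s)))"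
      unfolding E_def by (rule sum_supersets_card) (use cI in auto)
    also have "\<dots> = (\<Sum>s=Suc (j+1)..Suc d. real ((n-j-1) choose (s - (j+1))) * (- t * ln (1 - X s)))"
      using cI by simp
    also have "\<dots> = (\<Sum>k=j+1..d. real ((n-j-1) choose (Suc k - (j+1))) * (- t * ln (1 - X (Suc k))))"
      by (rule sum.shift_bounds_cl_Suc_ivl)
    also have "\<dots> = Gk" unfolding Gk_def X_def by (intro sum.cong) auto
    finally show ?thesis .
  qed
  have G: "(\<Sum>I\<in>J. sum g (E I)) = real (card J) * Gk" using sumE by simp
  define B1 where "B1 = real d * Cf * C^2 * L^2 / real n"
  have E1I: "(\<Sum>e\<in>E I. \<bar>f e - g e\<bar>) \<le> B1" if I: "I \<in> J" for I
  proof -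
    have cI: "card I = j + 1" "I \<subseteq> {1..n}" using J(3)[OF I] by auto
    have "(\<Sum>e\<in>E I. \<bar>f e - g e\<bar>) \<le> (\<Sum>e\<in>E I. (\<lambda>s. Cf * X s^2) (card e))"
      using fg by (intro sum_mono) auto
    also have "\<dots> = (\<Sum>s=j+2..d+1. real ((card {1..n} - card I) choose (s - card I)) * (Cf * X s^2))"
      unfolding E_def by (rule sum_supersets_card) (use cI in auto)
    also have "\<dots> \<le> (\<Sum>s=j+2..d+1. Cf * C^2 * L^2 / real n)"
    proof (rule sum_mono)
      fix s assume s: "s \<in> {j+2..d+1}"
      have "real ((card {1..n} - card I) choose (s - card I)) \<le> real n ^ (s - 1 - j)"
        using cI by (intro order.trans[OF choose_le_pow'[of _ n]]) (auto simp: diff_diff_add)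
      then have "real ((card {1..n} - card I) choose (s - card I)) * X s \<le> real n ^ (s - 1 - j) * X s"
        using Xp(1) by (intro mult_right_mono) auto
      also have "\<dots> \<le> C * L" using Xn[OF s] by (simp add: mult.commute)
      finally have a: "real ((card {1..n} - card I) choose (s - card I)) * X s \<le> C * L" .
      have "real ((card {1..n} - card I) choose (s - card I)) * (Cf * X s^2)
           = Cf * (real ((card {1..n} - card I) choose (s - card I)) * X s) * X s"
        by (simp add: power2_eq_square algebra_simps)
      also have "\<dots> \<le> Cf * (C * L) * (C * L / real n)"
      proof -
        have Cf0: "0 \<le> Cf" unfolding Cf_def using t by simp
        have h1: "Cf * (real ((card {1..n} - card I) choose (s - card I)) * X s) \<le> Cf * (C * L)"
          by (rule mult_left_mono[OF a Cf0])
        have "0 \<le> Cf * (C * L)" using Cf0 C L1 by simp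
        then show ?thesis using mult_mono[OF h1 Xd[of s]] Xp(1)[of s] by simp

      qed
      also have "\<dots> = Cf * C^2 * L^2 / real n" by (simp add: power2_eq_square)
      finally show "real ((card {1..n} - card I) choose (s - card I)) * (Cf * X s^2) \<le> Cf * C^2 * L^2 / real n" .
    qed
    also have "\<dots> = real (d - j) * (Cf * C^2 * L^2 / real n)" using j by simp
    also have "\<dots> \<le> real d * (Cf * C^2 * L^2 / real n)"
    proof (rule mult_right_mono)
      show "0 \<le> Cf * C^2 * L^2 / real n" using t unfolding Cf_def by simp
    qed simp
    also have "\<dots> = B1" unfolding B1_def by simp
    finally show ?thesis .
  qed
  have E2: "sum f (U \<inter> S) \<le> real MS * (2 * T * C * L / real n)"
  proof -
    have "sum f (U \<inter> S) \<le> real (card (U \<inter> S)) * (2 * T * C * L / real n)"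
    proof (rule sum_bounded_above)
      fix e assume "e \<in> U \<inter> S"
      have "f e \<le> 2 * T * X (card e)" by (rule f2)
      also have "\<dots> \<le> 2 * T * (C * L / real n)" using Xd t by (intro mult_left_mono) auto
      finally show "f e \<le> 2 * T * C * L / real n" by simp
    qed
    also have "\<dots> \<le> real MS * (2 * T * C * L / real n)"
    proof (rule mult_right_mono)
      have "card (U \<inter> S) \<le> card S" using S(1) by (intro card_mono) auto
      then show "real (card (U \<inter> S)) \<le> real MS" using S(2) by simp
      show "0 \<le> 2 * T * C * L / real n" using t C L1 by simp
    qed
    finally show ?thesis .
  qed
  define B3 where "B3 = real d * (2 * T * C * L / real n)"
  have E3: "sum g (E I \<inter> E I') \<le> B3" if I: "I \<in> J" "I' \<in> J" "I \<noteq> I'" for I I'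
  proof -
    have cI: "card I = j + 1" "I \<subseteq> {1..n}" "card I' = j + 1" "I' \<subseteq> {1..n}" using J(3) I by auto
    have fI: "finite I" using cI(2) finite_subset by blast
    have "\<not> I' \<subseteq> I"
    proof
      assume "I' \<subseteq> I"
      then have "I' = I" using card_subset_eq[OF fI] cI by auto
      then show False using I by simp
    qed
    then obtain v where v: "v \<in> I'" "v \<notin> I" by blast
    define Lv where "Lv = insert v I"
    have cL: "card Lv = j + 2" "Lv \<subseteq> {1..n}" using v cI fI unfolding Lv_def by auto
    have "E I \<inter> E I' \<subseteq> {e. e \<subseteq> {1..n} \<and> Lv \<subseteq> e \<and> j+2 \<le> card e \<and> card e \<le> d+1}"
      unfolding E_def Lv_def using v by auto
    then have "sum g (E I \<inter> E I') \<le> (\<Sum>e\<in>{e. e \<subseteq> {1..n} \<and> Lv \<subseteq> e \<and> j+2 \<le> card e \<and> card e \<le> d+1}. (\<lambda>s. - t * ln (1 - X s)) (card e))"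
      unfolding g_def using g0 unfolding g_def
      by (intro sum_mono2) (auto intro: rev_finite_subset[of "Pow {1..n}"])
    also have "\<dots> = (\<Sum>s=j+2..d+1. real ((card {1..n} - card Lv) choose (s - card Lv)) * (- t * ln (1 - X s)))"
      by (rule sum_supersets_card) (use cL in auto)
    also have "\<dots> \<le> (\<Sum>s=j+2..d+1. 2 * T * C * L / real n)"
    proof (rule sum_mono)
      fix s assume s: "s \<in> {j+2..d+1}"
      let ?b = "real ((card {1..n} - card Lv) choose (s - card Lv))"
      have b: "?b \<le> real n ^ (s - j - 2)"
        using cL by (intro order.trans[OF choose_le_pow'[of _ n]]) auto
      have gb: "- t * ln (1 - X s) \<le> 2 * T * X s" using g2[of "{1..s}"] unfolding g_def by simp
      have "?b * (- t * ln (1 - X s)) \<le> real n ^ (s - j - 2) * (2 * T * X s)"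
      proof -
        have "0 \<le> - t * ln (1 - X s)" using g0[of "{1..s}"] unfolding g_def by simp
        then show ?thesis using mult_mono[OF b gb] by simp
      qed
      also have "\<dots> = 2 * T * ((real n ^ (s - j - 2) * X s * real n) / real n)" using nr by simp
      also have "real n ^ (s - j - 2) * X s * real n = X s * real n ^ (s - 1 - j)"
      proof -
        have "s - 1 - j = Suc (s - j - 2)" using s by auto
        then show ?thesis by (simp add: algebra_simps)
      qed
      also have "2 * T * ((X s * real n ^ (s - 1 - j)) / real n) \<le> 2 * T * ((C * L) / real n)"
        using Xn[OF s] t nr by (intro mult_left_mono divide_right_mono) auto
      finally show "?b * (- t * ln (1 - X s)) \<le> 2 * T * C * L / real n" by simp
    qed
    also have "\<dots> = real (d - j) * (2 * T * C * L / real n)" using j by simp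
    also have "\<dots> \<le> B3" unfolding B3_def
    proof (rule mult_right_mono)
      show "0 \<le> 2 * T * C * L / real n" using t C L1 by simp
    qed simp
    finally show ?thesis .
  qed
  have Pairs: "(\<Sum>I\<in>J. \<Sum>I'\<in>J. if I = I' then 0 else sum g (E I \<inter> E I')) \<le> real MJ ^ 2 * B3"
  proof -
    have B30: "0 \<le> B3" unfolding B3_def using t C L1 by simp
    have "(\<Sum>I\<in>J. \<Sum>I'\<in>J. if I = I' then 0 else sum g (E I \<inter> E I')) \<le> (\<Sum>I\<in>J. \<Sum>I'\<in>J. B3)"
      using E3 B30 by (intro sum_mono) auto
    also have "\<dots> = real (card J) ^ 2 * B3" by (simp add: power2_eq_square)
    also have "\<dots> \<le> real MJ ^ 2 * B3" using J(2) B30 by (intro mult_right_mono power_mono) auto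
    finally show ?thesis .
  qed
  define SB where "SB = sum f Bad"
  define E1t where "E1t = (\<Sum>I\<in>J. \<Sum>e\<in>E I. \<bar>f e - g e\<bar>)"
  have E1t: "E1t \<le> real MJ * B1"
  proof -
    have "E1t \<le> (\<Sum>I\<in>J. B1)" unfolding E1t_def using E1I by (intro sum_mono) auto
    also have "\<dots> \<le> real MJ * B1"
    proof -
      have "0 \<le> B1" unfolding B1_def Cf_def using t by simp
      then show ?thesis using J(2) by (simp add: mult_right_mono)
    qed
    finally show ?thesis .
  qed
  have up: "SB \<le> real (card J) * Gk + E1t"
  proof -
    have "SB \<le> sum f U" unfolding SB_def using finU BadU f0 by (intro sum_mono2) auto
    also have "\<dots> \<le> (\<Sum>I\<in>J. sum f (E I))" unfolding U_def
      by (rule sum_union_bound) (use J(1) finE f0 in auto)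
    also have "\<dots> \<le> (\<Sum>I\<in>J. sum g (E I) + (\<Sum>e\<in>E I. \<bar>f e - g e\<bar>))"
      by (intro sum_mono) (simp add: sum.distrib[symmetric] sum_mono)
    also have "\<dots> = real (card J) * Gk + E1t" unfolding E1t_def sum.distrib G ..
    finally show ?thesis .
  qed
  have lo: "real (card J) * Gk - E1t - real MS * (2 * T * C * L / real n) - real MJ ^ 2 * B3 \<le> SB"
  proof -
    have finB: "finite Bad" using finU BadU finite_subset by blast
    have a: "sum f U \<le> SB + sum f (U \<inter> S)"
    proof -
      have "sum f U \<le> sum f (Bad \<union> (U \<inter> S))" using UBad f0 finB finU by (intro sum_mono2) auto
      also have "\<dots> = SB + sum f (U \<inter> S) - sum f (Bad \<inter> (U \<inter> S))"
        unfolding SB_def using finB finU by (intro sum_Un) auto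
      also have "\<dots> \<le> SB + sum f (U \<inter> S)" using f0 sum_nonneg[of "Bad \<inter> (U \<inter> S)" f] by simp
      finally show ?thesis .
    qed
    have b: "sum g U \<le> sum f U + E1t"
    proof -
      have "sum g U \<le> sum f U + (\<Sum>e\<in>U. \<bar>f e - g e\<bar>)"
        by (simp add: sum.distrib[symmetric] sum_mono)
      also have "(\<Sum>e\<in>U. \<bar>f e - g e\<bar>) \<le> E1t" unfolding U_def E1t_def
        by (rule sum_union_bound) (use J(1) finE in auto)
      finally show ?thesis by simp
    qed
    have c: "real (card J) * Gk \<le> sum g U + real MJ ^ 2 * B3"
    proof -
      have "real (card J) * Gk \<le> sum g U + (\<Sum>I\<in>J. \<Sum>I'\<in>J. if I = I' then 0 else sum g (E I \<inter> E I'))"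
        unfolding G[symmetric] U_def by (rule sum_bonferroni) (use J(1) finE g0 in auto)
      then show ?thesis using Pairs by simp
    qed
    show ?thesis using a b c E2 by simp
  qed
  have fin: "\<bar>SB - real (card J) * Gk\<bar> \<le> real MJ * B1 + real MS * (2 * T * C * L / real n) + real MJ ^ 2 * B3"
  proof -
    have "0 \<le> real MS * (2 * T * C * L / real n)" "0 \<le> real MJ ^ 2 * B3"
      unfolding B3_def using t C L1 by simp_all
    then show ?thesis using up lo E1t by (simp add: abs_le_iff)
  qed
  also have "\<dots> \<le> (real MJ * d * (2*T^2+2*T) * C^2 + real MS * 2 * T * C + real MJ^2 * d * 2 * T * C) * L^2 / real n"
  proof -
    have LL: "L \<le> L^2" using L1 by (simp add: power2_eq_square)
    have "real MS * (2 * T * C * L / real n) \<le> real MS * (2 * T * C * L^2 / real n)"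
      using LL t C nr by (intro mult_left_mono divide_right_mono) auto
    moreover have "real MJ ^ 2 * B3 \<le> real MJ ^ 2 * (real d * (2 * T * C * L^2 / real n))"
      unfolding B3_def using LL t C nr by (intro mult_left_mono divide_right_mono) auto
    ultimately have "real MJ * B1 + real MS * (2 * T * C * L / real n) + real MJ ^ 2 * B3
       \<le> real MJ * B1 + real MS * (2 * T * C * L^2 / real n) + real MJ ^ 2 * (real d * (2 * T * C * L^2 / real n))"
      by linarith
    also have "\<dots> = (real MJ * d * (2*T^2+2*T) * C^2 + real MS * 2 * T * C + real MJ^2 * d * 2 * T * C) * L^2 / real n"
      unfolding B1_def Cf_def by (simp add: add_divide_distrib algebra_simps)
    finally show ?thesis .
  qed
  finally have main: "\<bar>SB - real (card J) * Gk\<bar> \<le> (real MJ * d * (2*T^2+2*T) * C^2 + real MS * 2 * T * C + real MJ^2 * d * 2 * T * C) * L^2 / real n" .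
  have "SB = (\<Sum>e\<in>Bad. - ln (1 - t * x (card e - 1)))" unfolding SB_def f_def
  proof (rule sum.cong[OF refl])
    fix e assume "e \<in> Bad"
    then have "e \<in> U" using BadU by auto
    then have "card e - 1 \<in> {j+1..d}" unfolding U_def E_def by auto
    then show "- ln (1 - t * X (card e)) = - ln (1 - t * x (card e - 1))" unfolding X_def by simp
  qed
  then show ?thesis using main unfolding Bad_def Gk_def L_def by simp
qed



lemma finite_candidate: "finite (candidate_edges d n)"
  unfolding candidate_edges_def by (rule rev_finite_subset[of "Pow {1..n}"]) auto

lemma prob_formula:
  fixes p :: "nat \<Rightarrow> nat \<Rightarrow> real"
  assumes "1 \<le> j"
  shows "measure_pmf.prob (random_complex d p n) {G. event_A n d j J S G}
       = (\<Prod>e\<in>{e \<in> candidate_edges d n. \<exists>I\<in>J. \<exists>K. I \<subseteq> K \<and> K \<subseteq> e \<and> j+2 \<le> card K \<and> K \<notin> S}.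
            pmf (bernoulli_pmf (min (p (card e - 1) n) 1)) False)"
proof -
  define Cn where "Cn = candidate_edges d n"
  define Bad where "Bad = {e \<in> candidate_edges d n. \<exists>I\<in>J. \<exists>K. I \<subseteq> K \<and> K \<subseteq> e \<and> j+2 \<le> card K \<and> K \<notin> S}"
  define B where "B = (\<lambda>e. if e \<in> Bad then {False} else (UNIV :: bool set))"
  define P where "P = (\<lambda>e::nat set. bernoulli_pmf (min (p (card e - 1) n) 1))"
  have finC: "finite Cn" unfolding Cn_def by (rule finite_candidate)
  have BadC: "Bad \<subseteq> Cn" unfolding Bad_def Cn_def by auto
  have equiv: "event_A n d j J S G \<longleftrightarrow> G \<in> Pi Cn B" if G: "\<forall>e. e \<notin> Cn \<longrightarrow> G e = False" for G
  proof
    assume A: "event_A n d j J S G"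
    show "G \<in> Pi Cn B"
    proof (rule Pi_I)
      fix e assume eC: "e \<in> Cn"
      show "G e \<in> B e"
      proof (cases "e \<in> Bad")
        case False then show ?thesis unfolding B_def by simp
      next
        case True
        then obtain I K where IK: "I \<in> J" "I \<subseteq> K" "K \<subseteq> e" "j+2 \<le> card K" "K \<notin> S"
          unfolding Bad_def by blast
        have e: "e \<subseteq> {1..n}" "card e \<le> d + 1" using eC unfolding Cn_def candidate_edges_def by auto
        have fe: "finite e" using e(1) finite_subset by blast
        have "card K \<le> card e" using card_mono[OF fe IK(3)] .
        have "K \<noteq> {}" using IK(4) by auto
        have "\<not> G e"
        proof
          assume "G e"
          have Kn: "K \<subseteq> {1..n}" using IK(3) e(1) by auto
          have "is_simplex n G K" unfolding is_simplex_def using Kn \<open>K \<noteq> {}\<close> \<open>G e\<close> IK(3) by blast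
          then have "\<exists>I\<in>J. \<exists>K. I \<subseteq> K \<and> j+2 \<le> card K \<and> card K \<le> d+1 \<and> K \<notin> S \<and> is_simplex n G K"
            using IK \<open>card K \<le> card e\<close> e(2) by (intro bexI[of _ I] exI[of _ K]) auto
          then show False using A unfolding event_A_def by blast
        qed
        then show ?thesis unfolding B_def using True by simp
      qed
    qed
  next
    assume PB: "G \<in> Pi Cn B"
    show "event_A n d j J S G" unfolding event_A_def
    proof
      assume "\<exists>I\<in>J. \<exists>K. I \<subseteq> K \<and> j + 2 \<le> card K \<and> card K \<le> d + 1 \<and> K \<notin> S \<and> is_simplex n G K"
      then obtain I K where IK: "I \<in> J" "I \<subseteq> K" "j + 2 \<le> card K" "K \<notin> S" "is_simplex n G K" by blast
      have "card K \<noteq> 1" using IK(3) by simp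
      then obtain e where e: "G e" "K \<subseteq> e" using IK(5) unfolding is_simplex_def by blast
      have "e \<in> Cn" using G e(1) by blast
      then have "e \<in> Bad" unfolding Bad_def Cn_def using IK e by blast
      moreover have "G e \<in> B e" using Pi_mem[OF PB \<open>e \<in> Cn\<close>] .
      ultimately have "G e \<in> {False}" unfolding B_def by simp
      then show False using e(1) by simp
    qed
  qed
  have "measure_pmf.prob (random_complex d p n) {G. event_A n d j J S G}
      = measure_pmf.prob (Pi_pmf Cn False P) (Pi Cn B)"
    unfolding random_complex_def Cn_def[symmetric] P_def[symmetric]
  proof (rule measure_prob_cong_0)
    fix G assume "G \<in> {G. event_A n d j J S G} - Pi Cn B"
    then show "pmf (Pi_pmf Cn False P) G = 0"
      using equiv set_Pi_pmf_subset[OF finC, of False P] by (auto simp: set_pmf_eq)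
  next
    fix G assume "G \<in> Pi Cn B - {G. event_A n d j J S G}"
    then show "pmf (Pi_pmf Cn False P) G = 0"
      using equiv set_Pi_pmf_subset[OF finC, of False P] by (auto simp: set_pmf_eq)
  qed
  also have "\<dots> = (\<Prod>e\<in>Cn. measure_pmf.prob (P e) (B e))"
    by (rule measure_Pi_pmf_Pi[OF finC])
  also have "\<dots> = (\<Prod>e\<in>Cn. if e \<in> Bad then pmf (P e) False else 1)"
    unfolding B_def by (intro prod.cong) (auto simp: measure_pmf_single)
  also have "\<dots> = (\<Prod>e\<in>Cn \<inter> Bad. pmf (P e) False)"
    by (rule prod.inter_restrict[symmetric, OF finC])
  also have "Cn \<inter> Bad = Bad" using BadC by auto
  finally show ?thesis unfolding Bad_def P_def .
qed

lemma lnn_lim: "(\<lambda>n. ln (real n)^2 / real n) \<longlonglongrightarrow> 0" by real_asymp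
lemma lnn_lim1: "(\<lambda>n. ln (real n) / real n) \<longlonglongrightarrow> 0" by real_asymp

theorem proposition4p12:
  fixes d j :: nat
    and pbar :: "nat \<Rightarrow> nat \<Rightarrow> real"
    and \<tau> :: "nat \<Rightarrow> real"
    and J S :: "nat \<Rightarrow> nat set set"
  assumes "d \<ge> 2" and "1 \<le> j" and "j \<le> d - 1"
    and "j_admissible d j pbar"
    and "\<And>n. \<tau> n \<ge> 0" and "\<tau> \<in> O(\<lambda>_. 1)"
    and "\<And>n. finite (J n)" and "\<exists>C. \<forall>n. card (J n) \<le> C"
    and "\<And>n I. I \<in> J n \<Longrightarrow> I \<subseteq> {1..n} \<and> card I = j + 1"
    and "\<And>n. finite (S n)" and "\<exists>C. \<forall>n. card (S n) \<le> C"
    and "\<And>n K. K \<in> S n \<Longrightarrow> K \<subseteq> {1..n} \<and> j + 2 \<le> card K \<and> card K \<le> d + 1"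
  shows "(\<lambda>n. measure_pmf.prob (random_complex d (\<lambda>k n. \<tau> n * pbar k n) n)
                 {G. event_A n d j (J n) (S n) G})
         \<sim>[sequentially] (\<lambda>n. qbar d j pbar n powr (\<tau> n * real (card (J n))))"
proof -
  note adm = assms(4)
  have j: "1 \<le> j" "j + 1 \<le> d" using assms(1-3) by auto
  obtain MJ where MJ: "\<And>n. card (J n) \<le> MJ" using assms(8) by blast
  obtain MS where MS: "\<And>n. card (S n) \<le> MS" using assms(11) by blast
  obtain c where c: "c > 0" "eventually (\<lambda>n. norm (\<tau> n) \<le> c * norm (1::real)) sequentially"
    using landau_o.bigE[OF assms(6)] by blast
  define T where "T = max c 1"
  have T1: "1 \<le> T" unfolding T_def by simp
  have evT: "eventually (\<lambda>n. \<tau> n \<le> T) sequentially"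
    using c(2) by eventually_elim (auto simp: T_def)
  define K where "K = {j+1..d}"
  have "\<forall>k\<in>K. \<exists>C>0. eventually (\<lambda>n. 0 \<le> pbar k n \<and> pbar k n * real n ^ (k-j) \<le> C * ln (real n)) sequentially"
    using pbar_bound[OF adm] unfolding K_def by blast
  then obtain Cf where Cf: "\<And>k. k \<in> K \<Longrightarrow> Cf k > 0 \<and> eventually (\<lambda>n. 0 \<le> pbar k n \<and> pbar k n * real n ^ (k-j) \<le> Cf k * ln (real n)) sequentially"
    by metis
  define C0 where "C0 = (\<Sum>k\<in>K. Cf k)"
  have finK: "finite K" unfolding K_def by simp
  have CfC0: "Cf k \<le> C0" if "k \<in> K" for k
    unfolding C0_def using finK that Cf by (intro member_le_sum) (auto simp: less_imp_le)
  have C0: "0 \<le> C0" unfolding C0_def using Cf by (intro sum_nonneg) (auto simp: less_imp_le)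
  have evn1: "eventually (\<lambda>n. (1::nat) \<le> n) sequentially" by (rule eventually_ge_at_top)
  have evP: "eventually (\<lambda>n. \<forall>k\<in>K. 0 \<le> pbar k n \<and> pbar k n * real n ^ (k-j) \<le> C0 * ln (real n)) sequentially"
  proof -
    have "eventually (\<lambda>n. \<forall>k\<in>K. 0 \<le> pbar k n \<and> pbar k n * real n ^ (k-j) \<le> Cf k * ln (real n)) sequentially"
      using Cf finK by (intro eventually_ball_finite) auto
    then show ?thesis using ln_ev_ge1
    proof eventually_elim
      case (elim n)
      show ?case
      proof
        fix k assume k: "k \<in> K"
        have "Cf k * ln (real n) \<le> C0 * ln (real n)" using CfC0[OF k] elim(2) by (intro mult_right_mono) auto
        then show "0 \<le> pbar k n \<and> pbar k n * real n ^ (k-j) \<le> C0 * ln (real n)" using elim(1) k by fastforce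
      qed
    qed
  qed
  have evsmall: "eventually (\<lambda>n. T * (C0 * ln (real n) / real n) \<le> 1/2) sequentially"
  proof -
    have "(\<lambda>n. T * C0 * (ln (real n) / real n)) \<longlonglongrightarrow> T * C0 * 0"
      by (intro tendsto_mult tendsto_const lnn_lim1)
    then have "eventually (\<lambda>n. T * C0 * (ln (real n) / real n) < 1/2) sequentially"
      by (intro order_tendstoD) auto
    then show ?thesis by eventually_elim (simp add: algebra_simps)
  qed
  have evT2: "eventually (\<lambda>n. \<forall>k\<in>K. T * pbar k n \<le> 1/2) sequentially"
    using evP evsmall evn1
  proof eventually_elim
    case (elim n)
    show ?case
    proof
      fix k assume k: "k \<in> K"
      have nr: "real n \<ge> 1" using elim(3) by simp
      have "real n ^ 1 \<le> real n ^ (k - j)" using k nr unfolding K_def by (intro power_increasing) auto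
      then have "pbar k n * real n \<le> pbar k n * real n ^ (k-j)" using elim(1) k by (simp add: mult_left_mono)
      also have "\<dots> \<le> C0 * ln (real n)" using elim(1) k by blast
      finally have "pbar k n \<le> C0 * ln (real n) / real n" using nr by (simp add: field_simps)
      then have "T * pbar k n \<le> T * (C0 * ln (real n) / real n)" using T1 by (intro mult_left_mono) auto
      then show "T * pbar k n \<le> 1/2" using elim(2) by linarith
    qed
  qed
  define K0 where "K0 = real MJ * d * (2*T^2+2*T) * C0^2 + real MS * 2 * T * C0 + real MJ^2 * d * 2 * T * C0"
  define Bad where "Bad = (\<lambda>n. {e \<in> candidate_edges d n. \<exists>I\<in>J n. \<exists>K. I \<subseteq> K \<and> K \<subseteq> e \<and> j+2 \<le> card K \<and> K \<notin> S n})"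
  define SB where "SB = (\<lambda>n. \<Sum>e\<in>Bad n. - ln (1 - \<tau> n * pbar (card e - 1) n))"
  define Gk where "Gk = (\<lambda>n. \<Sum>k\<in>{j+1..d}. real ((n-j-1) choose (k-j)) * (- \<tau> n * ln (1 - pbar k n)))"
  define D where "D = (\<lambda>n. real (card (J n)) * Gk n - SB n)"
  define P where "P = (\<lambda>n. measure_pmf.prob (random_complex d (\<lambda>k n. \<tau> n * pbar k n) n) {G. event_A n d j (J n) (S n) G})"
  define R where "R = (\<lambda>n. qbar d j pbar n powr (\<tau> n * real (card (J n))))"
  have evgood: "eventually (\<lambda>n. \<bar>D n\<bar> \<le> K0 * (ln (real n)^2 / real n) \<and> P n / R n = exp (D n)) sequentially"
    using evP evT2 evT evn1 ln_ev_ge1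
  proof eventually_elim
    case (elim n)
    have hx: "\<And>k. k \<in> {j+1..d} \<Longrightarrow> 0 \<le> pbar k n \<and> pbar k n * real n ^ (k-j) \<le> C0 * ln (real n)"
      using elim(1) unfolding K_def by blast
    have hT: "\<And>k. k \<in> {j+1..d} \<Longrightarrow> T * pbar k n \<le> 1/2" using elim(2) unfolding K_def by blast
    have cr: "\<bar>SB n - real (card (J n)) * Gk n\<bar> \<le> K0 * ln (real n)^2 / real n"
      unfolding SB_def Gk_def Bad_def K0_def
      by (rule core[OF j elim(4,5) assms(7) MJ assms(9) assms(10) MS assms(5) elim(3) T1 C0 hx hT])
    have t: "0 \<le> \<tau> n" "\<tau> n \<le> T" using assms(5) elim(3) by auto
    have px: "0 \<le> pbar k n" "pbar k n \<le> 1/2" "\<tau> n * pbar k n \<le> 1/2" if "k \<in> {j+1..d}" for k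
    proof -
      show "0 \<le> pbar k n" using hx[OF that] by simp
      have "pbar k n \<le> T * pbar k n" using mult_right_mono[of 1 T "pbar k n"] \<open>0 \<le> pbar k n\<close> T1 by simp
      then show "pbar k n \<le> 1/2" using hT[OF that] by simp
      have "\<tau> n * pbar k n \<le> T * pbar k n" using \<open>0 \<le> pbar k n\<close> t by (simp add: mult_right_mono)
      then show "\<tau> n * pbar k n \<le> 1/2" using hT[OF that] by simp
    qed
    have cardBad: "card e - 1 \<in> {j+1..d}" if "e \<in> Bad n" for e
    proof -
      from that obtain I K where e: "e \<in> candidate_edges d n" "I \<in> J n" "I \<subseteq> K" "K \<subseteq> e" "j+2 \<le> card K"
        unfolding Bad_def by blast
      have fe: "finite e" using e(1) unfolding candidate_edges_def using finite_subset by blast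
      have "card K \<le> card e" using card_mono[OF fe e(4)] .
      then show ?thesis using e(1,5) unfolding candidate_edges_def by auto
    qed
    have finB: "finite (Bad n)" unfolding Bad_def using finite_candidate[of d n] by simp
    have Pn: "P n = exp (- SB n)"
    proof -
      have "P n = (\<Prod>e\<in>Bad n. pmf (bernoulli_pmf (min (\<tau> n * pbar (card e - 1) n) 1)) False)"
        unfolding P_def Bad_def by (rule prob_formula[OF assms(2)])
      also have "\<dots> = (\<Prod>e\<in>Bad n. exp (ln (1 - \<tau> n * pbar (card e - 1) n)))"
      proof (rule prod.cong[OF refl])
        fix e assume "e \<in> Bad n"
        note q = px[OF cardBad[OF this]]
        have "0 \<le> \<tau> n * pbar (card e - 1) n" using q t by simp
        then show "pmf (bernoulli_pmf (min (\<tau> n * pbar (card e - 1) n) 1)) False = exp (ln (1 - \<tau> n * pbar (card e - 1) n))"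
          using q by simp
      qed
      also have "\<dots> = exp (\<Sum>e\<in>Bad n. ln (1 - \<tau> n * pbar (card e - 1) n))"
        by (rule exp_sum[symmetric, OF finB])
      also have "\<dots> = exp (- SB n)" unfolding SB_def by (simp add: sum_negf)
      finally show ?thesis .
    qed
    have qpos: "0 < qbar d j pbar n" unfolding qbar_def
    proof (intro prod_pos zero_less_power)
      fix k assume "k \<in> {j+1..d}"
      then show "0 < 1 - pbar k n" using px(2)[of k] by simp
    qed
    have lnq: "ln (qbar d j pbar n) = (\<Sum>k\<in>{j+1..d}. real ((n - j - 1) choose (k - j)) * ln (1 - pbar k n))"
      unfolding qbar_def
    proof (subst ln_prod)
      show "(\<Sum>k\<in>{j+1..d}. ln ((1 - pbar k n) ^ (n - j - 1 choose (k - j)))) = (\<Sum>k\<in>{j+1..d}. real (n - j - 1 choose (k - j)) * ln (1 - pbar k n))"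
        using px by (intro sum.cong refl ln_realpow)
    next
      fix k assume "k \<in> {j+1..d}"
      then have "pbar k n \<le> 1/2" by (rule px(2))
      then show "(1 - pbar k n) ^ (n - j - 1 choose (k - j)) \<noteq> 0" by simp
    qed simp
    have Rn: "R n = exp (- (real (card (J n)) * Gk n))"
    proof -
      have "R n = exp ((\<tau> n * real (card (J n))) * ln (qbar d j pbar n))"
        unfolding R_def powr_def using qpos by simp
      also have "(\<tau> n * real (card (J n))) * ln (qbar d j pbar n) = - (real (card (J n)) * Gk n)"
        unfolding lnq Gk_def by (simp add: sum_distrib_left algebra_simps sum_negf)
      finally show ?thesis .
    qed
    have "P n / R n = exp (D n)" unfolding Pn Rn D_def by (simp add: exp_diff[symmetric])
    moreover have "\<bar>D n\<bar> \<le> K0 * (ln (real n)^2 / real n)" unfolding D_def using cr by (simp add: abs_minus_commute)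
    ultimately show ?case by simp
  qed
  have "D \<longlonglongrightarrow> 0"
  proof (rule Lim_null_comparison)
    show "eventually (\<lambda>n. norm (D n) \<le> K0 * (ln (real n)^2 / real n)) sequentially"
      using evgood by eventually_elim simp
    show "(\<lambda>n. K0 * (ln (real n)^2 / real n)) \<longlonglongrightarrow> 0"
      using tendsto_mult_right_zero[OF lnn_lim, of K0] by (simp add: mult.commute)
  qed
  then have "(\<lambda>n. exp (D n)) \<longlonglongrightarrow> exp 0" by (intro tendsto_exp)
  then have lim1: "(\<lambda>n. exp (D n)) \<longlonglongrightarrow> 1" by simp
  have ev2: "eventually (\<lambda>n. exp (D n) = P n / R n) sequentially"
    using evgood by eventually_elim simp
  have "(\<lambda>n. P n / R n) \<longlonglongrightarrow> 1"
    by (rule Lim_transform_eventually[OF lim1 ev2])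
  then have "P \<sim>[sequentially] R" by (rule asymp_equivI')
  then show ?thesis unfolding P_def R_def .
qed


end
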